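(* Let $n=2k+1$ with $k$ a positive integer, and let $(\Gamma,+)$ be an abelian group of order $n$ with neutral element $e$ such that $\sum_{g\in\Gamma} g = e$ and $2g\neq e$ for all $g\in\Gamma\setminus\{e\}$. Let $p,q$ be two new symbols and let $P_n=(\Gamma\times(\Gamma\setminus\{e\}))\cup\{p,q\}$. Define the lines - $L_g=\{(h,g): h\in\Gamma\}$ for $g\in\Gamma\setminus\{e\}$; - $l_{p_g}=\{(g,h): h\in\Gamma\setminus\{e\}\}\cup\{p\}$ for $g\in\Gamma$; - $l_{q_g}=\{(h,h+g): h\in\Gamma,\ h+g\neq e\}\cup\{q\}$ for $g\in\Gamma$, and let $\mathcal{L}_n$ be the family of all these $3n-1$ lines. Then the linear system $\mathcal{C}_{n,n+1}=(P_n,\mathcal{L}_n)$ satisfies $\nu_2(\mathcal{C}_{n,n+1})=n+1$.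
   Context: A linear system is a pair $(P,\mathcal{L})$ with $P$ a finite set of points and $\mathcal{L}$ a family of subsets of $P$ (lines) such that any two distinct lines share at most one point. A 2-packing is a set $R$ of lines such that no three distinct lines of $R$ have a common point; $\nu_2$ denotes the maximum cardinality of a 2-packing. *)

theory Defs
  imports Main
begin

definition linear_system :: "'p set \<Rightarrow> 'p set set \<Rightarrow> bool" where
  "linear_system P L \<longleftrightarrow> finite P \<and> (\<forall>l\<in>L. l \<subseteq> P) \<and>
     (\<forall>l1\<in>L. \<forall>l2\<in>L. l1 \<noteq> l2 \<longrightarrow> card (l1 \<inter> l2) \<le> 1)"

definition two_packing :: "'p set set \<Rightarrow> 'p set set \<Rightarrow> bool" where
  "two_packing L R \<longleftrightarrow> R \<subseteq> L \<and>
     (\<forall>l1\<in>R. \<forall>l2\<in>R. \<forall>l3\<in>R. l1 \<noteq> l2 \<and> l1 \<noteq> l3 \<and> l2 \<noteq> l3 \<longrightarrow>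
        l1 \<inter> l2 \<inter> l3 = {})"

definition nu2 :: "'p set set \<Rightarrow> nat" where
  "nu2 L = Max (card ` {R. two_packing L R})"

datatype 'a pt = Pt 'a 'a | PP | QQ

definition Cpoints :: "('a::ab_group_add) pt set" where
  "Cpoints = {Pt h g | h g. g \<noteq> 0} \<union> {PP, QQ}"

definition lineL :: "'a::ab_group_add \<Rightarrow> 'a pt set" where
  "lineL g = {Pt h g | h. True}"

definition lineP :: "'a::ab_group_add \<Rightarrow> 'a pt set" where
  "lineP g = {Pt g h | h. h \<noteq> 0} \<union> {PP}"

definition lineQ :: "'a::ab_group_add \<Rightarrow> 'a pt set" where
  "lineQ g = {Pt h (h + g) | h. h + g \<noteq> 0} \<union> {QQ}"

definition Clines :: "('a::ab_group_add) pt set set" where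
  "Clines = {lineL g | g. g \<noteq> 0} \<union> {lineP g | g. True} \<union> {lineQ g | g. True}"

end

theory Submission
  imports Defs
begin

lemma memL[simp]: "Pt a b \<in> lineL g \<longleftrightarrow> b = g" "PP \<notin> lineL g" "QQ \<notin> lineL g"
  by (auto simp: lineL_def)
lemma memP[simp]: "Pt a b \<in> lineP g \<longleftrightarrow> a = g \<and> b \<noteq> 0" "PP \<in> lineP g" "QQ \<notin> lineP g"
  by (auto simp: lineP_def)
lemma memQ[simp]: "Pt a b \<in> lineQ g \<longleftrightarrow> b = a + g \<and> b \<noteq> 0" "PP \<notin> lineQ g" "QQ \<in> lineQ g"
  by (auto simp: lineQ_def)

lemma neqs[simp]: "lineL g \<noteq> lineP h" "lineP h \<noteq> lineL g" "lineL g \<noteq> lineQ h" "lineQ h \<noteq> lineL g"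
  "lineP g \<noteq> lineQ h" "lineQ h \<noteq> lineP g"
  by (metis memL(2,3) memP(2,3) memQ(2,3))+

lemma injL: "lineL g = lineL h \<Longrightarrow> g = h"
  by (metis memL(1))

lemma injP: fixes g h :: "'a::ab_group_add" assumes "(x::'a) \<noteq> 0" shows "lineP g = lineP h \<Longrightarrow> g = h"
  by (metis assms memP(1))

lemma injQ: fixes g h :: "'a::ab_group_add" assumes "(x::'a) \<noteq> 0" shows "lineQ g = lineQ h \<Longrightarrow> g = h"
proof -
  assume e: "lineQ g = lineQ h"
  have "Pt (x - g) (x - g + g) \<in> lineQ g" using assms by simp
  then have "Pt (x - g) (x - g + g) \<in> lineQ h" using e by simp
  then show "g = h" by simp
qed

lemma card_le1: assumes "\<forall>a\<in>S. \<forall>b\<in>S. a = b" shows "card S \<le> 1"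
proof (cases "S = {}")
  case False
  then obtain a where "a \<in> S" by auto
  with assms have "S = {a}" by auto
  then show ?thesis by simp
qed simp

lemma Clines_cases: "l \<in> Clines \<Longrightarrow> (\<exists>g. g \<noteq> 0 \<and> l = lineL g) \<or> (\<exists>g. l = lineP g) \<or> (\<exists>g. l = lineQ g)"
  by (auto simp: Clines_def)

lemma four_sums:
  fixes a1 a2 b1 b2 :: "'a::ab_group_add"
  assumes "a1 \<noteq> a2" "b1 \<noteq> b2" "\<forall>g::'a. g \<noteq> 0 \<longrightarrow> g + g \<noteq> 0"
  shows "\<exists>x y. x \<noteq> y \<and> x \<noteq> 0 \<and> y \<noteq> 0 \<and> x \<in> {a1+b1,a1+b2,a2+b1,a2+b2} \<and> y \<in> {a1+b1,a1+b2,a2+b1,a2+b2}"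
proof -
  have d1: "a1+b1 \<noteq> a1+b2" "a1+b1 \<noteq> a2+b1" "a2+b2 \<noteq> a1+b2" "a2+b2 \<noteq> a2+b1" using assms by auto
  have d2: "a1+b2 \<noteq> a2+b1 \<or> a1+b1 \<noteq> a2+b2"
  proof (rule ccontr)
    assume "\<not> ?thesis"
    then have "a1+b2 = a2+b1" "a1+b1 = a2+b2" by auto
    then have e: "(a1+b1) - (a2+b2) = 0" "(a2+b1) - (a1+b2) = 0" by simp_all
    have "(b1 - b2) + (b1 - b2) = (a1+b1) - (a2+b2) + ((a2+b1) - (a1+b2))" by (simp add: algebra_simps)
    then have "(b1 - b2) + (b1 - b2) = 0" using e by simp
    then show False using assms by auto
  qed
  show ?thesis
  proof (cases "a1+b1 = 0")
    case True
    show ?thesis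
    proof (cases "a2+b2 = 0")
      case False
      then show ?thesis using d1 True by (intro exI[of _ "a1+b2"] exI[of _ "a2+b2"]) auto
    next
      case t2: True
      then show ?thesis using d1 d2 True by (intro exI[of _ "a1+b2"] exI[of _ "a2+b1"]) auto
    qed
  next
    case f1: False
    show ?thesis
    proof (cases "a2+b2 = 0")
      case True
      then show ?thesis using d1 f1 by (intro exI[of _ "a1+b1"] exI[of _ "a1+b2"]) auto
    next
      case f2: False
      show ?thesis
      proof (cases "a1+b1 = a2+b2")
        case False
        then show ?thesis using f1 f2 by (intro exI[of _ "a1+b1"] exI[of _ "a2+b2"]) auto
      next
        case True
        then have "a1+b2 \<noteq> a2+b1" using d2 by simp
        then show ?thesis using d1 f1 f2
          by (cases "a1+b2 = 0"; cases "a2+b1 = 0") (intro exI[of _ "a1+b1"] exI[of _ "a2+b1"] exI[of _ "a1+b2"]; auto)+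
      qed
    qed
  qed
qed


lemma three_elems: assumes "3 \<le> card A"
  shows "\<exists>a b c. a\<in>A \<and> b\<in>A \<and> c\<in>A \<and> a\<noteq>b \<and> a\<noteq>c \<and> b\<noteq>c"
proof -
  obtain B where "B \<subseteq> A" "card B = 3" using obtain_subset_with_card_n[OF assms] by blast
  then show ?thesis by (auto simp: card_3_iff)
qed

lemma memC[simp]: "Pt a b \<in> Cpoints \<longleftrightarrow> b \<noteq> 0" "PP \<in> Cpoints" "QQ \<in> Cpoints"
  by (auto simp: Cpoints_def)

lemma lines_through: "Pt a b \<in> l \<Longrightarrow> l \<in> Clines \<Longrightarrow> l = lineL b \<or> l = lineP a \<or> l = lineQ (b - a)"
  by (drule Clines_cases) (auto simp: algebra_simps)

lemma pair_unique:
  assumes "l1 \<in> Clines" "l2 \<in> Clines" "l1 \<noteq> l2" "x \<in> l1" "x \<in> l2" "y \<in> l1" "y \<in> l2"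
  shows "x = y"
  using Clines_cases[OF assms(1)] Clines_cases[OF assms(2)] assms(3-7)
  by (cases x; cases y) auto

lemma Clines_eq: "Clines = lineL ` {g. g \<noteq> 0} \<union> range lineP \<union> range lineQ"
  by (auto simp: Clines_def)

theorem proposition3p2:
  fixes k :: nat and n :: nat
  assumes "k > 0"
    and "n = 2 * k + 1"
    and "card (UNIV :: ('a::{ab_group_add, finite}) set) = n"
    and "(\<Sum>g\<in>(UNIV::'a set). g) = 0"
    and "\<forall>g::'a. g \<noteq> 0 \<longrightarrow> g + g \<noteq> 0"
  shows "linear_system (Cpoints :: 'a pt set) Clines \<and> nu2 (Clines :: 'a pt set set) = n + 1"
proof -
  have ncard: "card (UNIV::'a set) \<ge> 3" using assms by simp
  have "\<exists>x::'a. x \<noteq> 0"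
  proof (rule ccontr)
    assume "\<not> ?thesis"
    then have e: "UNIV = {0::'a}" by auto
    have "card (UNIV::'a set) = card {0::'a}" by (rule arg_cong[OF e])
    then show False using ncard by simp
  qed
  then obtain x0 :: 'a where x0: "x0 \<noteq> 0" by blast
  have finL: "finite (Clines :: 'a pt set set)" unfolding Clines_eq by simp
  have finP: "finite (Cpoints :: 'a pt set)"
  proof -
    have "(Cpoints :: 'a pt set) \<subseteq> (\<lambda>(h,g). Pt h g) ` UNIV \<union> {PP, QQ}"
      unfolding Cpoints_def by auto
    then show ?thesis by (rule finite_subset) simp
  qed
  have LS: "linear_system (Cpoints :: 'a pt set) Clines"
    unfolding linear_system_def
  proof (intro conjI ballI impI)
    show "finite (Cpoints :: 'a pt set)" by (rule finP)
  next
    fix l :: "'a pt set" assume "l \<in> Clines"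
    then show "l \<subseteq> Cpoints"
      using Clines_cases[of l] by (auto elim!: pt.exhaust[of x for x]) (metis memC pt.exhaust memL(1) memP(1) memQ(1))+
  next
    fix l1 l2 :: "'a pt set" assume "l1 \<in> Clines" "l2 \<in> Clines" "l1 \<noteq> l2"
    then show "card (l1 \<inter> l2) \<le> 1"
      by (intro card_le1) (auto intro: pair_unique)
  qed
  define Z where "Z = {R. two_packing (Clines :: 'a pt set set) R}"
  have finZ: "finite (card ` Z)"
  proof -
    have "Z \<subseteq> Pow Clines" unfolding Z_def two_packing_def by auto
    then show ?thesis using finL by (meson finite_Pow_iff finite_imageI finite_subset)
  qed
  define R0 where "R0 = lineL ` {g::'a. g \<noteq> 0} \<union> {lineQ 0, lineQ x0}"
  have R0Z: "R0 \<in> Z"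
    unfolding Z_def two_packing_def
  proof (intro CollectI conjI ballI impI)
    show "R0 \<subseteq> Clines" unfolding R0_def Clines_eq by auto
  next
    fix l1 l2 l3 assume l: "l1 \<in> R0" "l2 \<in> R0" "l3 \<in> R0" and d: "l1 \<noteq> l2 \<and> l1 \<noteq> l3 \<and> l2 \<noteq> l3"
    show "l1 \<inter> l2 \<inter> l3 = {}"
    proof (rule ccontr)
      assume "l1 \<inter> l2 \<inter> l3 \<noteq> {}"
      then obtain x where x: "x \<in> l1" "x \<in> l2" "x \<in> l3" by auto
      show False
      proof (cases x)
        case (Pt a b)
        have "\<And>l. l \<in> R0 \<Longrightarrow> x \<in> l \<Longrightarrow> l = lineL b \<or> l = lineQ (b - a)"
        proof -
          fix l assume "l \<in> R0" "x \<in> l"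
          moreover have "l \<in> Clines" using \<open>l \<in> R0\<close> unfolding R0_def Clines_eq by auto
          ultimately have "l = lineL b \<or> l = lineP a \<or> l = lineQ (b - a)" using Pt lines_through by blast
          moreover have "l \<noteq> lineP a" using \<open>l \<in> R0\<close> unfolding R0_def by auto
          ultimately show "l = lineL b \<or> l = lineQ (b - a)" by blast
        qed
        then show False using l x d by metis
      next
        case PP
        then show False using l x unfolding R0_def by auto
      next
        case QQ
        then show False using l x d unfolding R0_def by auto
      qed
    qed
  qed
  have cR0: "card R0 = n + 1"
  proof -
    have "card (lineL ` {g::'a. g \<noteq> 0}) = card {g::'a. g \<noteq> 0}"
      by (rule card_image) (auto intro: inj_onI injL)
    also have "\<dots> = card (UNIV - {0::'a})" by (rule arg_cong[where f=card]) auto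
    also have "card (UNIV - {0::'a}) = n - 1" using assms(3) by (simp add: card_Diff_singleton)
    finally have c1: "card (lineL ` {g::'a. g \<noteq> 0}) = n - 1" .
    have c2: "card {lineQ (0::'a), lineQ x0} = 2" proof -
      have "lineQ (0::'a) \<noteq> lineQ x0" using injQ[OF x0, of 0 x0] x0 by auto
      then show ?thesis by (simp add: card_2_iff)
    qed
    have "card R0 = card (lineL ` {g::'a. g \<noteq> 0}) + card {lineQ (0::'a), lineQ x0}"
      unfolding R0_def by (rule card_Un_disjoint) auto
    then show ?thesis using c1 c2 assms(2) by simp
  qed
  have UB: "card R \<le> n + 1" if RZ: "R \<in> Z" for R
  proof -
    have tp: "R \<subseteq> Clines" and tri: "\<And>l1 l2 l3. l1 \<in> R \<Longrightarrow> l2 \<in> R \<Longrightarrow> l3 \<in> R \<Longrightarrow>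
        l1 \<noteq> l2 \<Longrightarrow> l1 \<noteq> l3 \<Longrightarrow> l2 \<noteq> l3 \<Longrightarrow> l1 \<inter> l2 \<inter> l3 = {}"
      using RZ unfolding Z_def two_packing_def by auto
    define S where "S = {g::'a. g \<noteq> 0 \<and> lineL g \<in> R}"
    define A where "A = {g::'a. lineP g \<in> R}"
    define B where "B = {g::'a. lineQ g \<in> R}"
    define X where "X = {a + c | a c. a \<in> A \<and> c \<in> B} - {0}"
    have "R \<subseteq> lineL ` S \<union> lineP ` A \<union> lineQ ` B"
      using tp unfolding S_def A_def B_def Clines_def by auto
    then have "card R \<le> card (lineL ` S \<union> lineP ` A \<union> lineQ ` B)" by (intro card_mono) auto
    also have "\<dots> \<le> card (lineL ` S) + card (lineP ` A) + card (lineQ ` B)"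
      by (meson add_mono card_Un_le le_trans order_refl)
    also have "\<dots> \<le> card S + card A + card B"
      by (intro add_mono card_image_le) auto
    finally have c0: "card R \<le> card S + card A + card B" .
    have cA: "card A \<le> 2"
    proof (rule ccontr)
      assume "\<not> ?thesis"
      then obtain a b c where "a\<in>A" "b\<in>A" "c\<in>A" "a\<noteq>b" "a\<noteq>c" "b\<noteq>c"
        using three_elems[of A] by auto
      moreover have "lineP a \<noteq> lineP b" "lineP a \<noteq> lineP c" "lineP b \<noteq> lineP c"
        using calculation injP[OF x0] by metis+
      ultimately have "lineP a \<inter> lineP b \<inter> lineP c = {}" using tri unfolding A_def by auto
      then show False using memP(2)[of a] memP(2)[of b] memP(2)[of c] by blast
    qed
    have cB: "card B \<le> 2"
    proof (rule ccontr)
      assume "\<not> ?thesis"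
      then obtain a b c where "a\<in>B" "b\<in>B" "c\<in>B" "a\<noteq>b" "a\<noteq>c" "b\<noteq>c"
        using three_elems[of B] by auto
      moreover have "lineQ a \<noteq> lineQ b" "lineQ a \<noteq> lineQ c" "lineQ b \<noteq> lineQ c"
        using calculation injQ[OF x0] by metis+
      ultimately have "lineQ a \<inter> lineQ b \<inter> lineQ c = {}" using tri unfolding B_def by auto
      then show False using memQ(3)[of a] memQ(3)[of b] memQ(3)[of c] by blast
    qed
    have SX: "S \<inter> X = {}"
    proof (rule ccontr)
      assume "S \<inter> X \<noteq> {}"
      then obtain a c where ac: "a \<in> A" "c \<in> B" "a + c \<noteq> 0" "a + c \<in> S" unfolding X_def by auto
      then have "lineL (a+c) \<inter> lineP a \<inter> lineQ c = {}"
        using tri unfolding S_def A_def B_def by auto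
      moreover have "Pt a (a+c) \<in> lineL (a+c) \<inter> lineP a \<inter> lineQ c" using ac by simp
      ultimately show False by blast
    qed
    have "S \<union> X \<subseteq> UNIV - {0}" unfolding S_def X_def by auto
    then have "card (S \<union> X) \<le> card (UNIV - {0::'a})" by (intro card_mono) auto
    also have "\<dots> = n - 1" using assms(3) by (simp add: card_Diff_singleton)
    finally have cSX: "card S + card X \<le> n - 1" using SX by (simp add: card_Un_disjoint)
    have finX: "finite X" by simp
    have key: "card A + card B \<le> 2 + card X"
    proof -
      have two: "card X \<ge> 2" if h: "a1 \<in> A" "a2 \<in> A" "b1 \<in> B" "b2 \<in> B" "a1 \<noteq> a2" "b1 \<noteq> b2" for a1 a2 b1 b2
      proof -
        obtain x y where "x \<noteq> y" "x \<noteq> 0" "y \<noteq> 0" "x \<in> {a1+b1,a1+b2,a2+b1,a2+b2}" "y \<in> {a1+b1,a1+b2,a2+b1,a2+b2}"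
          using four_sums[OF h(5,6) assms(5)] by blast
        then have "{x,y} \<subseteq> X" using h unfolding X_def by auto
        then have "card {x,y} \<le> card X" by (intro card_mono) auto
        then show ?thesis using \<open>x \<noteq> y\<close> by simp
      qed
      have one: "card X \<ge> 1" if "a1 \<in> A" "a2 \<in> A" "b1 \<in> B" "a1 \<noteq> a2" for a1 a2 b1
      proof -
        have "a1 + b1 \<noteq> a2 + b1" using that(4) by simp
        moreover have "a1 + b1 \<noteq> 0 \<Longrightarrow> a1 + b1 \<in> X" using that unfolding X_def by blast
        moreover have "a2 + b1 \<noteq> 0 \<Longrightarrow> a2 + b1 \<in> X" using that unfolding X_def by blast
        ultimately have "X \<noteq> {}" by (metis empty_iff)
        then show ?thesis using finX by (simp add: Suc_leI card_gt_0_iff)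
      qed
      have one': "card X \<ge> 1" if "a1 \<in> A" "b1 \<in> B" "b2 \<in> B" "b1 \<noteq> b2" for a1 b1 b2
      proof -
        have "a1 + b1 \<noteq> a1 + b2" using that(4) by simp
        moreover have "a1 + b1 \<noteq> 0 \<Longrightarrow> a1 + b1 \<in> X" using that unfolding X_def by blast
        moreover have "a1 + b2 \<noteq> 0 \<Longrightarrow> a1 + b2 \<in> X" using that unfolding X_def by blast
        ultimately have "X \<noteq> {}" by (metis empty_iff)
        then show ?thesis using finX by (simp add: Suc_leI card_gt_0_iff)
      qed
      show ?thesis
      proof (cases "A = {} \<or> B = {}")
        case True
        then show ?thesis using cA cB by auto
      next
        case False
        then obtain a b where ab: "a \<in> A" "b \<in> B" by auto
        have "card A > 0" "card B > 0" using ab by (auto simp: card_gt_0_iff)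
        then have c12: "card A = 1 \<or> card A = 2" "card B = 1 \<or> card B = 2"
          using cA cB by auto
        show ?thesis
        proof (cases "card A = 2")
          case True
          then obtain a1 a2 where "A = {a1, a2}" "a1 \<noteq> a2" by (auto simp: card_2_iff)
          note A2 = this
          show ?thesis
          proof (cases "card B = 2")
            case True
            then obtain b1 b2 where "B = {b1, b2}" "b1 \<noteq> b2" by (auto simp: card_2_iff)
            then have "card X \<ge> 2" using two[of a1 a2 b1 b2] A2 by auto
            then show ?thesis using True \<open>card A = 2\<close> by simp
          next
            case False
            then have "card B = 1" using c12 by auto
            moreover have "card X \<ge> 1" using one[of a1 a2 b] A2 ab by auto
            ultimately show ?thesis using \<open>card A = 2\<close> by simp
          qed
        next
          case False
          then have "card A = 1" using c12 by auto
          note A1 = this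
          show ?thesis
          proof (cases "card B = 2")
            case True
            then obtain b1 b2 where "B = {b1, b2}" "b1 \<noteq> b2" by (auto simp: card_2_iff)
            then have "card X \<ge> 1" using one'[of a b1 b2] ab by auto
            then show ?thesis using True A1 by simp
          next
            case False
            then have "card B = 1" using c12 by auto
            then show ?thesis using A1 by simp
          qed
        qed
      qed
    qed
    show ?thesis using c0 cSX key assms(2) by linarith
  qed
  have "nu2 (Clines :: 'a pt set set) = n + 1"
    unfolding nu2_def Z_def[symmetric]
  proof (rule Max_eqI[OF finZ])
    show "y \<le> n + 1" if "y \<in> card ` Z" for y using that UB by auto
    show "n + 1 \<in> card ` Z" using R0Z cR0 by force
  qed
  then show ?thesis using LS by simp
qed

end
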